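(* For every closed guarded expression $\phi\in\mathcal{E}_0$, every $T$-coalgebra $C=(X,\xi)$ and every state $x\in X$: $x\in[\![\phi]\!]_C$ if and only if $x$ is behaviourally equivalent to $\phi$ regarded as a state of the coalgebra $(\mathcal{E}_0,\varepsilon)$. In particular, $\phi\in[\![\phi]\!]_{(\mathcal{E}_0,\varepsilon)}$ for all $\phi\in\mathcal{E}_0$.
   Context: Standing assumptions: $T:\mathbf{Set}\to\mathbf{Set}$ is a functor; $\mathcal{L}$ is a set of modalities with arities ($L/n$), each $L/n$ assigned an $n$-ary monotone singleton-preserving predicate lifting $[\![L]\!]$ for $T$ such that $\Lambda=\{[\![L]\!]\mid L\in\mathcal{L}\}$ is strongly expressive. (An $n$-ary predicate lifting is a family $\lambda_X:(\mathcal{P}X)^n\to\mathcal{P}(TX)$ with $\lambda_X(f^{-1}[A_1],\dots,f^{-1}[A_n])=(Tf)^{-1}[\lambda_Y(A_1,\dots,A_n)]$ for $f:X\to Y$; monotone if monotone in each argument; singleton-preserving if $|\lambda_X(\{x_1\},\dots,\{x_n\})|=1$ for all $x_i\in X$; $\Lambda$ strongly expressive if for every set $X$ and $t\in TX$ there are $\lambda/n\in\Lambda$, $x_i\in X$ with $\{t\}=\lambda_X(\{x_1\},\dots,\{x_n\})$.) Fix a set $V$ of variables. Expressions: $\phi::=z\mid\nu z.\,\phi\mid L(\phi_1,\dots,\phi_n)$. Closed: every variable occurrence bound by a $\nu$; guarded: every variable occurrence separated from its binding $\nu$ by at least one modality; $\mathcal{E}_0$ = closed guarded expressions. Semantics in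 $C=(X,\xi)$ under valuation $\kappa:V\to\mathcal{P}X$: $[\![z]\!]^\kappa=\kappa(z)$; $[\![L(\phi_1,\dots,\phi_n)]\!]^\kappa=\xi^{-1}[[\![L]\!]_X([\![\phi_1]\!]^\kappa,\dots,[\![\phi_n]\!]^\kappa)]$; $[\![\nu z.\phi]\!]^\kappa=$ greatest fixed point of $Y\mapsto[\![\phi]\!]^{\kappa[z\mapsto Y]}$; for closed $\phi$ write $[\![\phi]\!]_C$. The coalgebra $\varepsilon:\mathcal{E}_0\to T\mathcal{E}_0$ is defined by $\varepsilon(L(\phi_1,\dots,\phi_n))=$ the unique element of $[\![L]\!]_{\mathcal{E}_0}(\{\phi_1\},\dots,\{\phi_n\})$ and $\varepsilon(\nu x.\phi)=\varepsilon(\phi[\nu x.\phi/x])$ (well-defined by induction on the number of $\nu$'s not in the scope of a modality). States are behaviourally equivalent if coalgebra morphisms (maps $h$ with $Th\circ\xi=\zeta\circ h$) into a common coalgebra identify them. *)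

theory Defs
  imports Main
begin

text \<open>A functor T on Set is represented by its action on the subsets of a
universe type 'u: TO X is the set T X (as a subset of a type 't of
T-values) and TM f is T f, where f : X -> Y is any HOL function mapping X
into Y (only its values on X matter).\<close>

definition set_functor :: "('u set \<Rightarrow> 't set) \<Rightarrow> (('u \<Rightarrow> 'u) \<Rightarrow> 't \<Rightarrow> 't) \<Rightarrow> bool" where
  "set_functor TO TM \<longleftrightarrow>
     (\<forall>X Y f. (\<forall>x\<in>X. f x \<in> Y) \<longrightarrow> (\<forall>t\<in>TO X. TM f t \<in> TO Y)) \<and>
     (\<forall>X. \<forall>t\<in>TO X. TM id t = t) \<and>
     (\<forall>X Y Z f g. (\<forall>x\<in>X. f x \<in> Y) \<longrightarrow> (\<forall>y\<in>Y. g y \<in> Z) \<longrightarrow>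
          (\<forall>t\<in>TO X. TM (g \<circ> f) t = TM g (TM f t))) \<and>
     (\<forall>X f g. (\<forall>x\<in>X. f x = g x) \<longrightarrow> (\<forall>t\<in>TO X. TM f t = TM g t))"

text \<open>lift L X [A1,...,An] is the n-ary predicate lifting [[L]]_X(A1,...,An),
where n = ar L; it is only meaningful for lists of length ar L of subsets of X.\<close>

definition pred_liftings ::
  "('u set \<Rightarrow> 't set) \<Rightarrow> (('u \<Rightarrow> 'u) \<Rightarrow> 't \<Rightarrow> 't) \<Rightarrow> ('l \<Rightarrow> nat)
     \<Rightarrow> ('l \<Rightarrow> 'u set \<Rightarrow> 'u set list \<Rightarrow> 't set) \<Rightarrow> bool" where
  "pred_liftings TO TM ar lift \<longleftrightarrow>
     (\<forall>L X As. length As = ar L \<and> (\<forall>A\<in>set As. A \<subseteq> X) \<longrightarrow> lift L X As \<subseteq> TO X) \<and>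
     (\<forall>L X Y f Bs. (\<forall>x\<in>X. f x \<in> Y) \<and> length Bs = ar L \<and> (\<forall>B\<in>set Bs. B \<subseteq> Y) \<longrightarrow>
        lift L X (map (\<lambda>B. {x\<in>X. f x \<in> B}) Bs) = {t\<in>TO X. TM f t \<in> lift L Y Bs})"

definition monotone_liftings ::
  "('l \<Rightarrow> nat) \<Rightarrow> ('l \<Rightarrow> 'u set \<Rightarrow> 'u set list \<Rightarrow> 't set) \<Rightarrow> bool" where
  "monotone_liftings ar lift \<longleftrightarrow>
     (\<forall>L X As Bs. length As = ar L \<and> length Bs = ar L \<and>
        (\<forall>i<ar L. As ! i \<subseteq> Bs ! i \<and> Bs ! i \<subseteq> X) \<longrightarrow> lift L X As \<subseteq> lift L X Bs)"

definition singleton_preserving ::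
  "('l \<Rightarrow> nat) \<Rightarrow> ('l \<Rightarrow> 'u set \<Rightarrow> 'u set list \<Rightarrow> 't set) \<Rightarrow> bool" where
  "singleton_preserving ar lift \<longleftrightarrow>
     (\<forall>L X xs. length xs = ar L \<and> set xs \<subseteq> X \<longrightarrow>
        card (lift L X (map (\<lambda>x. {x}) xs)) = 1)"

definition strongly_expressive ::
  "('u set \<Rightarrow> 't set) \<Rightarrow> ('l \<Rightarrow> nat) \<Rightarrow> ('l \<Rightarrow> 'u set \<Rightarrow> 'u set list \<Rightarrow> 't set) \<Rightarrow> bool" where
  "strongly_expressive TO ar lift \<longleftrightarrow>
     (\<forall>X. \<forall>t\<in>TO X. \<exists>L xs. length xs = ar L \<and> set xs \<subseteq> X \<and>
        lift L X (map (\<lambda>x. {x}) xs) = {t})"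

definition is_coalg :: "('u set \<Rightarrow> 't set) \<Rightarrow> 'u set \<Rightarrow> ('u \<Rightarrow> 't) \<Rightarrow> bool" where
  "is_coalg TO X \<xi> \<longleftrightarrow> (\<forall>x\<in>X. \<xi> x \<in> TO X)"

definition coalg_hom ::
  "(('u \<Rightarrow> 'u) \<Rightarrow> 't \<Rightarrow> 't) \<Rightarrow> 'u set \<Rightarrow> ('u \<Rightarrow> 't) \<Rightarrow> 'u set \<Rightarrow> ('u \<Rightarrow> 't) \<Rightarrow> ('u \<Rightarrow> 'u) \<Rightarrow> bool" where
  "coalg_hom TM X \<xi> Y \<zeta> h \<longleftrightarrow> (\<forall>x\<in>X. h x \<in> Y) \<and> (\<forall>x\<in>X. TM h (\<xi> x) = \<zeta> (h x))"

definition beh_equiv ::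
  "('u set \<Rightarrow> 't set) \<Rightarrow> (('u \<Rightarrow> 'u) \<Rightarrow> 't \<Rightarrow> 't)
     \<Rightarrow> 'u set \<Rightarrow> ('u \<Rightarrow> 't) \<Rightarrow> 'u \<Rightarrow> 'u set \<Rightarrow> ('u \<Rightarrow> 't) \<Rightarrow> 'u \<Rightarrow> bool" where
  "beh_equiv TO TM X \<xi> x Y \<zeta> y \<longleftrightarrow>
     (\<exists>Z \<theta> h g. is_coalg TO Z \<theta> \<and> coalg_hom TM X \<xi> Z \<theta> h \<and> coalg_hom TM Y \<zeta> Z \<theta> g \<and> h x = g y)"

datatype ('l, 'v) expr = Var 'v | Nu 'v "('l, 'v) expr" | Mod 'l "('l, 'v) expr list"

fun fv :: "('l, 'v) expr \<Rightarrow> 'v set" where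
  "fv (Var z) = {z}"
| "fv (Nu z e) = fv e - {z}"
| "fv (Mod L es) = (\<Union>e\<in>set es. fv e)"

text \<open>guarded_in S e: no occurrence in e of a variable in S (variables bound
by a nu not yet separated by a modality) is free in e before a modality.\<close>
fun guarded_in :: "'v set \<Rightarrow> ('l, 'v) expr \<Rightarrow> bool" where
  "guarded_in S (Var z) = (z \<notin> S)"
| "guarded_in S (Nu z e) = guarded_in (insert z S) e"
| "guarded_in S (Mod L es) = (\<forall>e\<in>set es. guarded_in {} e)"

fun wf_expr :: "('l \<Rightarrow> nat) \<Rightarrow> ('l, 'v) expr \<Rightarrow> bool" where
  "wf_expr ar (Var z) = True"
| "wf_expr ar (Nu z e) = wf_expr ar e"
| "wf_expr ar (Mod L es) = (length es = ar L \<and> (\<forall>e\<in>set es. wf_expr ar e))"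

definition E0 :: "('l \<Rightarrow> nat) \<Rightarrow> ('l, 'v) expr set" where
  "E0 ar = {e. wf_expr ar e \<and> fv e = {} \<and> guarded_in {} e}"

text \<open>Substitution (only used with closed s, so no capture can occur).\<close>
fun subst :: "'v \<Rightarrow> ('l, 'v) expr \<Rightarrow> ('l, 'v) expr \<Rightarrow> ('l, 'v) expr" where
  "subst x s (Var z) = (if z = x then s else Var z)"
| "subst x s (Nu z e) = (if z = x then Nu z e else Nu z (subst x s e))"
| "subst x s (Mod L es) = Mod L (map (subst x s) es)"

text \<open>The nu case is the greatest fixed point on the lattice of subsets of X,
written via Knaster-Tarski as the union of all post-fixed points.\<close>
fun sem :: "('l \<Rightarrow> 'u set \<Rightarrow> 'u set list \<Rightarrow> 't set) \<Rightarrow> 'u set \<Rightarrow> ('u \<Rightarrow> 't)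
              \<Rightarrow> ('v \<Rightarrow> 'u set) \<Rightarrow> ('l, 'v) expr \<Rightarrow> 'u set" where
  "sem lift X \<xi> \<kappa> (Var z) = \<kappa> z"
| "sem lift X \<xi> \<kappa> (Nu z e) = \<Union>{Y. Y \<subseteq> X \<and> Y \<subseteq> sem lift X \<xi> (\<kappa>(z := Y)) e}"
| "sem lift X \<xi> \<kappa> (Mod L es) = {x\<in>X. \<xi> x \<in> lift L X (map (sem lift X \<xi> \<kappa>) es)}"

definition semC :: "('l \<Rightarrow> 'u set \<Rightarrow> 'u set list \<Rightarrow> 't set) \<Rightarrow> 'u set \<Rightarrow> ('u \<Rightarrow> 't)
              \<Rightarrow> ('l, 'v) expr \<Rightarrow> 'u set" where
  "semC lift X \<xi> \<phi> = sem lift X \<xi> (\<lambda>_. {}) \<phi>"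

text \<open>The universe of states is (expr + 'x); the expression coalgebra has
carrier Inl ` E0.\<close>

inductive eps_rel :: "('l \<Rightarrow> nat) \<Rightarrow> ('l \<Rightarrow> (('l, 'v) expr + 'x) set \<Rightarrow> (('l, 'v) expr + 'x) set list \<Rightarrow> 't set)
                        \<Rightarrow> ('l, 'v) expr \<Rightarrow> 't \<Rightarrow> bool"
  for ar lift where
  eps_mod: "lift L (Inl ` E0 ar) (map (\<lambda>\<phi>. {Inl \<phi>}) \<phi>s) = {t} \<Longrightarrow> eps_rel ar lift (Mod L \<phi>s) t"
| eps_nu: "eps_rel ar lift (subst x (Nu x \<phi>) \<phi>) t \<Longrightarrow> eps_rel ar lift (Nu x \<phi>) t"

definition eps_coalg :: "('l \<Rightarrow> nat) \<Rightarrow> ('l \<Rightarrow> (('l, 'v) expr + 'x) set \<Rightarrow> (('l, 'v) expr + 'x) set list \<Rightarrow> 't set)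
                           \<Rightarrow> ('l, 'v) expr + 'x \<Rightarrow> 't" where
  "eps_coalg ar lift u = (case u of Inl \<phi> \<Rightarrow> (THE t. eps_rel ar lift \<phi> t) | Inr _ \<Rightarrow> undefined)"

end

theory Submission
  imports Defs
begin


fun ssubst :: "('v \<Rightarrow> ('l,'v) expr) \<Rightarrow> ('l,'v) expr \<Rightarrow> ('l,'v) expr" where
  "ssubst \<sigma> (Var z) = \<sigma> z"
| "ssubst \<sigma> (Nu z e) = Nu z (ssubst (\<sigma>(z:=Var z)) e)"
| "ssubst \<sigma> (Mod L es) = Mod L (map (ssubst \<sigma>) es)"

fun nus :: "('l,'v) expr \<Rightarrow> nat" where
  "nus (Nu z e) = Suc (nus e)"
| "nus (Var z) = 0"
| "nus (Mod L es) = 0"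

lemma subst_nofv: "x \<notin> fv e \<Longrightarrow> subst x s e = e"
  by (induction e) (auto intro: map_idI)

lemma fv_subst: "fv s = {} \<Longrightarrow> fv (subst x s e) = fv e - {x}"
  by (induction e) auto

lemma wf_subst: "wf_expr ar s \<Longrightarrow> wf_expr ar e \<Longrightarrow> wf_expr ar (subst x s e)"
  by (induction e) auto

lemma guarded_mono: "guarded_in S e \<Longrightarrow> T \<inter> fv e = {} \<Longrightarrow> guarded_in (S \<union> T) e"
proof (induction e arbitrary: S T)
  case (Nu z e)
  have "guarded_in (insert z S \<union> (T - {z})) e"
    using Nu by (intro Nu.IH) auto
  moreover have "insert z S \<union> (T - {z}) = insert z (S \<union> T)" by auto
  ultimately show ?case by simp
qed auto

lemma guarded_subst: "guarded_in S e \<Longrightarrow> fv s = {} \<Longrightarrow> guarded_in {} s \<Longrightarrow> guarded_in (S - {x}) (subst x s e)"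
proof (induction e arbitrary: S)
  case (Var z)
  then show ?case using guarded_mono[of "{}" s "S - {x}"] by auto
next
  case (Nu z e)
  show ?case
  proof (cases "z = x")
    case True
    then show ?thesis using Nu.prems by (simp add: insert_absorb)
  next
    case False
    have "guarded_in (insert z S - {x}) (subst x s e)" using Nu by auto
    moreover have "insert z S - {x} = insert z (S - {x})" using False by auto
    ultimately show ?thesis using False by simp
  qed
next
  case (Mod L es)
  then show ?case by fastforce
qed

lemma nus_subst: "guarded_in S e \<Longrightarrow> x \<in> S \<Longrightarrow> nus (subst x s e) = nus e"
  by (induction e arbitrary: S) auto

lemma unfold_E0: "Nu x \<phi> \<in> E0 ar \<Longrightarrow> subst x (Nu x \<phi>) \<phi> \<in> E0 ar"
  using guarded_subst[of "{x}" \<phi> "Nu x \<phi>" x] fv_subst[of "Nu x \<phi>" x \<phi>] wf_subst[of ar "Nu x \<phi>" \<phi> x]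
  by (auto simp: E0_def)

lemma unfold_nus: "Nu x \<phi> \<in> E0 ar \<Longrightarrow> nus (subst x (Nu x \<phi>) \<phi>) < nus (Nu x \<phi>)"
  using nus_subst[of "{x}" \<phi> x] by (auto simp: E0_def)

lemma Mod_E0: "Mod L \<phi>s \<in> E0 ar \<Longrightarrow> length \<phi>s = ar L \<and> (\<forall>\<phi>\<in>set \<phi>s. \<phi> \<in> E0 ar)"
  by (auto simp: E0_def)

lemma ssubst_comp: "(\<forall>y\<in>fv e. y \<noteq> z \<longrightarrow> z \<notin> fv (\<sigma> y)) \<Longrightarrow>
   subst z N (ssubst (\<sigma>(z:=Var z)) e) = ssubst (\<sigma>(z:=N)) e"
proof (induction e arbitrary: \<sigma>)
  case (Var y)
  then show ?case by (auto intro: subst_nofv)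
next
  case (Nu y e)
  show ?case
  proof (cases "y = z")
    case True then show ?thesis by (simp only: ssubst.simps subst.simps fun_upd_upd if_True refl if_P)
  next
    case False
    have "subst z N (ssubst ((\<sigma>(y:=Var y))(z:=Var z)) e) = ssubst ((\<sigma>(y:=Var y))(z:=N)) e"
      using Nu.prems by (intro Nu.IH) auto
    moreover have "\<sigma>(z := Var z, y := Var y) = \<sigma>(y := Var y, z := Var z)"
      using False by (metis fun_upd_twist)
    moreover have "\<sigma>(z := N, y := Var y) = \<sigma>(y := Var y, z := N)"
      using False by (metis fun_upd_twist)
    ultimately show ?thesis using False by (simp del: fun_upd_apply)
  qed
qed auto

lemma ssubst_Var: "ssubst Var e = e"
  by (induction e) (auto intro: map_idI)




inductive_cases eps_ModE: "eps_rel ar lift (Mod L \<phi>s) t"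
inductive_cases eps_NuE: "eps_rel ar lift (Nu x \<phi>) t"
inductive_cases eps_VarE: "eps_rel ar lift (Var x) t"

lemma nat_lift:
  assumes pl: "pred_liftings TO TM ar lift" and f: "\<forall>x\<in>X. f x \<in> Y" and l: "length Bs = ar L"
    and B: "\<forall>B\<in>set Bs. B \<subseteq> Y"
  shows "lift L X (map (\<lambda>B. {x\<in>X. f x \<in> B}) Bs) = {t\<in>TO X. TM f t \<in> lift L Y Bs}"
proof -
  have "\<forall>L X Y f Bs. (\<forall>x\<in>X. f x \<in> Y) \<and> length Bs = ar L \<and> (\<forall>B\<in>set Bs. B \<subseteq> Y) \<longrightarrow>
        lift L X (map (\<lambda>B. {x\<in>X. f x \<in> B}) Bs) = {t\<in>TO X. TM f t \<in> lift L Y Bs}"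
    using pl unfolding pred_liftings_def by (rule conjunct2)
  then show ?thesis using f l B by blast
qed

lemma lift_sub:
  assumes pl: "pred_liftings TO TM ar lift" and l: "length As = ar L" and A: "\<forall>A\<in>set As. A \<subseteq> X"
  shows "lift L X As \<subseteq> TO X"
proof -
  have "\<forall>L X As. length As = ar L \<and> (\<forall>A\<in>set As. A \<subseteq> X) \<longrightarrow> lift L X As \<subseteq> TO X"
    using pl unfolding pred_liftings_def by (rule conjunct1)
  then show ?thesis using l A by blast
qed

lemma mono_lift:
  assumes ml: "monotone_liftings ar lift" and l: "length As = ar L" "length Bs = ar L"
    and AB: "\<And>i. i < ar L \<Longrightarrow> As ! i \<subseteq> Bs ! i \<and> Bs ! i \<subseteq> X"
  shows "lift L X As \<subseteq> lift L X Bs"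
  using ml l AB unfolding monotone_liftings_def by blast

lemma eps_rel_unique: "eps_rel ar lift a t \<Longrightarrow> eps_rel ar lift a t' \<Longrightarrow> t = t'"
proof (induction arbitrary: t' rule: eps_rel.induct)
  case (eps_mod L \<phi>s t)
  from eps_mod.prems eps_mod.hyps show ?case
    by (elim eps_ModE) simp
next
  case (eps_nu x \<phi> t)
  from eps_nu.prems show ?case
    by (elim eps_NuE) (simp add: eps_nu.IH)
qed

lemma eps_rel_exists:
  assumes pl: "pred_liftings TO TM ar lift" and sp: "singleton_preserving ar lift"
  shows "a \<in> E0 ar \<Longrightarrow> \<exists>t. eps_rel ar lift a t \<and> t \<in> TO (Inl ` E0 ar)"
proof (induction "nus a" arbitrary: a rule: less_induct)
  case less
  show ?case
  proof (cases a)
    case (Var z)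
    then show ?thesis using less.prems by (auto simp: E0_def)
  next
    case (Nu x \<phi>)
    have "subst x (Nu x \<phi>) \<phi> \<in> E0 ar" "nus (subst x (Nu x \<phi>) \<phi>) < nus a"
      using unfold_E0 unfold_nus less.prems Nu by auto
    then obtain t where "eps_rel ar lift (subst x (Nu x \<phi>) \<phi>) t \<and> t \<in> TO (Inl ` E0 ar)"
      using less.hyps by blast
    then show ?thesis using Nu eps_nu[of ar lift x \<phi> t] by blast
  next
    case (Mod L \<phi>s)
    have m: "length \<phi>s = ar L" "\<forall>\<phi>\<in>set \<phi>s. \<phi> \<in> E0 ar" using Mod_E0[of L \<phi>s ar] less.prems Mod by blast+
    have eq: "map (\<lambda>\<phi>. {Inl \<phi>}) \<phi>s = map (\<lambda>x. {x}) (map Inl \<phi>s)" by simp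
    have "card (lift L (Inl ` E0 ar) (map (\<lambda>x. {x}) (map Inl \<phi>s))) = 1"
    proof -
      have "length (map Inl \<phi>s) = ar L \<and> set (map Inl \<phi>s) \<subseteq> Inl ` E0 ar" using m by auto
      then show ?thesis using sp unfolding singleton_preserving_def by blast
    qed
    then obtain t where t: "lift L (Inl ` E0 ar) (map (\<lambda>\<phi>. {Inl \<phi>}) \<phi>s) = {t}"
      using eq by (metis card_1_singletonE)
    have "lift L (Inl ` E0 ar) (map (\<lambda>\<phi>. {Inl \<phi>}) \<phi>s) \<subseteq> TO (Inl ` E0 ar)"
      using pl m unfolding pred_liftings_def by auto
    then show ?thesis using t Mod eps_mod[of lift L ar \<phi>s t] by (metis insert_subset)
  qed
qed

lemma eps_coalg_rel:
  assumes pl: "pred_liftings TO TM ar lift" and sp: "singleton_preserving ar lift"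
    and a: "a \<in> E0 ar"
  shows "eps_rel ar lift a (eps_coalg ar lift (Inl a)) \<and> eps_coalg ar lift (Inl a) \<in> TO (Inl ` E0 ar)"
proof -
  obtain t where t: "eps_rel ar lift a t" "t \<in> TO (Inl ` E0 ar)" using eps_rel_exists[OF pl sp a] by blast
  have "(THE t. eps_rel ar lift a t) = t"
    by (rule the_equality) (use t eps_rel_unique[of ar lift a] in blast)+
  then show ?thesis using t by (simp add: eps_coalg_def)
qed

lemma eps_is_coalg:
  assumes pl: "pred_liftings TO TM ar lift" and sp: "singleton_preserving ar lift"
  shows "is_coalg TO (Inl ` E0 ar) (eps_coalg ar lift)"
  using eps_coalg_rel[OF pl sp] unfolding is_coalg_def by auto

lemma eps_Mod:
  assumes pl: "pred_liftings TO TM ar lift" and sp: "singleton_preserving ar lift"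
    and a: "Mod L \<phi>s \<in> E0 ar"
  shows "lift L (Inl ` E0 ar) (map (\<lambda>\<phi>. {Inl \<phi>}) \<phi>s) = {eps_coalg ar lift (Inl (Mod L \<phi>s))}"
  using eps_coalg_rel[OF pl sp a] by (auto elim: eps_ModE)

lemma eps_Nu:
  assumes pl: "pred_liftings TO TM ar lift" and sp: "singleton_preserving ar lift"
    and a: "Nu x \<phi> \<in> E0 ar"
  shows "eps_coalg ar lift (Inl (Nu x \<phi>)) = eps_coalg ar lift (Inl (subst x (Nu x \<phi>) \<phi>))"
proof -
  have "eps_rel ar lift (Nu x \<phi>) (eps_coalg ar lift (Inl (Nu x \<phi>)))" using eps_coalg_rel[OF pl sp a] by blast
  then have "eps_rel ar lift (subst x (Nu x \<phi>) \<phi>) (eps_coalg ar lift (Inl (Nu x \<phi>)))"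
    by (elim eps_NuE) simp
  moreover have "eps_rel ar lift (subst x (Nu x \<phi>) \<phi>) (eps_coalg ar lift (Inl (subst x (Nu x \<phi>) \<phi>)))"
    using eps_coalg_rel[OF pl sp unfold_E0[OF a]] by blast
  ultimately show ?thesis by (rule eps_rel_unique)
qed




lemma sem_sub: "(\<forall>z. \<kappa> z \<subseteq> X) \<Longrightarrow> sem lift X \<xi> \<kappa> e \<subseteq> X"
  by (induction e arbitrary: \<kappa>) auto

lemma sem_mono:
  assumes ml: "monotone_liftings ar lift"
  shows "wf_expr ar e \<Longrightarrow> (\<forall>z. \<kappa>1 z \<subseteq> \<kappa>2 z) \<Longrightarrow> (\<forall>z. \<kappa>2 z \<subseteq> X) \<Longrightarrow>
     sem lift X \<xi> \<kappa>1 e \<subseteq> sem lift X \<xi> \<kappa>2 e"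
proof (induction e arbitrary: \<kappa>1 \<kappa>2)
  case (Var z)
  then show ?case by auto
next
  case (Nu z e)
  show ?case
  proof
    fix x assume "x \<in> sem lift X \<xi> \<kappa>1 (Nu z e)"
    then obtain W where W: "W \<subseteq> X" "W \<subseteq> sem lift X \<xi> (\<kappa>1(z:=W)) e" "x \<in> W" by auto
    have "sem lift X \<xi> (\<kappa>1(z:=W)) e \<subseteq> sem lift X \<xi> (\<kappa>2(z:=W)) e"
      using Nu.prems W by (intro Nu.IH) auto
    then show "x \<in> sem lift X \<xi> \<kappa>2 (Nu z e)" using W by auto
  qed
next
  case (Mod L es)
  have "lift L X (map (sem lift X \<xi> \<kappa>1) es) \<subseteq> lift L X (map (sem lift X \<xi> \<kappa>2) es)"
  proof -
    have "\<forall>i<ar L. map (sem lift X \<xi> \<kappa>1) es ! i \<subseteq> map (sem lift X \<xi> \<kappa>2) es ! i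
         \<and> map (sem lift X \<xi> \<kappa>2) es ! i \<subseteq> X"
      using Mod sem_sub[of \<kappa>2 X lift \<xi>] by (auto intro!: Mod.IH)
    then show ?thesis using ml Mod.prems unfolding monotone_liftings_def by auto
  qed
  then show ?case by auto
qed

lemma sem_fv: "(\<forall>z\<in>fv e. \<kappa>1 z = \<kappa>2 z) \<Longrightarrow> sem lift X \<xi> \<kappa>1 e = sem lift X \<xi> \<kappa>2 e"
proof (induction e arbitrary: \<kappa>1 \<kappa>2)
  case (Nu z e)
  have "\<And>W. sem lift X \<xi> (\<kappa>1(z:=W)) e = sem lift X \<xi> (\<kappa>2(z:=W)) e"
    using Nu.prems by (intro Nu.IH) auto
  then show ?case by simp
next
  case (Mod L es)
  have meq: "map (sem lift X \<xi> \<kappa>1) es = map (sem lift X \<xi> \<kappa>2) es"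
  proof (rule map_cong[OF refl])
    fix x assume "x \<in> set es"
    then show "sem lift X \<xi> \<kappa>1 x = sem lift X \<xi> \<kappa>2 x"
      using Mod.prems by (intro Mod.IH) auto
  qed
  show ?case unfolding sem.simps meq by (rule refl)
qed auto

lemma sem_subst: "fv s = {} \<Longrightarrow> sem lift X \<xi> \<kappa> (subst x s e) = sem lift X \<xi> (\<kappa>(x := sem lift X \<xi> \<kappa> s)) e"
proof (induction e arbitrary: \<kappa>)
  case (Nu y e)
  show ?case
  proof (cases "y = x")
    case True then show ?thesis by (simp del: fun_upd_apply)
  next
    case False
    have "\<And>W. sem lift X \<xi> (\<kappa>(y:=W)) (subst x s e) = sem lift X \<xi> (\<kappa>(x := sem lift X \<xi> \<kappa> s, y:=W)) e"
    proof -
      fix W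
      have "sem lift X \<xi> (\<kappa>(y:=W)) (subst x s e) = sem lift X \<xi> (\<kappa>(y:=W, x := sem lift X \<xi> (\<kappa>(y:=W)) s)) e"
        using Nu by blast
      also have "sem lift X \<xi> (\<kappa>(y:=W)) s = sem lift X \<xi> \<kappa> s"
        using Nu.prems by (intro sem_fv) auto
      also have "\<kappa>(y:=W, x := sem lift X \<xi> \<kappa> s) = \<kappa>(x := sem lift X \<xi> \<kappa> s, y:=W)"
        using False by (metis fun_upd_twist)
      finally show "?thesis W" .
    qed
    then show ?thesis using False by (simp del: fun_upd_apply)
  qed
next
  case (Mod L es)
  have meq: "map (sem lift X \<xi> \<kappa>) (map (subst x s) es) = map (sem lift X \<xi> (\<kappa>(x := sem lift X \<xi> \<kappa> s))) es"
    unfolding map_map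
  proof (rule map_cong[OF refl])
    fix y assume "y \<in> set es"
    then show "(sem lift X \<xi> \<kappa> \<circ> subst x s) y = sem lift X \<xi> (\<kappa>(x := sem lift X \<xi> \<kappa> s)) y"
      using Mod.prems Mod.IH by (simp add: fun_upd_def)
  qed
  show ?case unfolding sem.simps subst.simps meq by (rule refl)
qed auto

lemma gfp_unfold:
  assumes ml: "monotone_liftings ar lift" and wf: "wf_expr ar e" and k: "\<forall>z. \<kappa> z \<subseteq> X"
  shows "sem lift X \<xi> \<kappa> (Nu z e) = sem lift X \<xi> (\<kappa>(z := sem lift X \<xi> \<kappa> (Nu z e))) e"
proof -
  define F where "F W = sem lift X \<xi> (\<kappa>(z:=W)) e" for W
  define G where "G = sem lift X \<xi> \<kappa> (Nu z e)"
  have G: "G = \<Union>{W. W \<subseteq> X \<and> W \<subseteq> F W}" by (simp add: G_def F_def)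
  have GX: "G \<subseteq> X" using G by auto
  have mono: "F A \<subseteq> F B" if "A \<subseteq> B" "B \<subseteq> X" for A B
    unfolding F_def using that k by (intro sem_mono[OF ml wf]) auto
  have FX: "F W \<subseteq> X" if "W \<subseteq> X" for W
    unfolding F_def using that k by (intro sem_sub) auto
  have 1: "G \<subseteq> F G"
  proof
    fix x assume "x \<in> G"
    then obtain W where W: "W \<subseteq> X" "W \<subseteq> F W" "x \<in> W" using G by auto
    have "W \<subseteq> G" using G W by auto
    then have "F W \<subseteq> F G" using mono GX by blast
    then show "x \<in> F G" using W by auto
  qed
  have "F G \<subseteq> F (F G)" using mono[OF 1 FX[OF GX]] .
  then have "F G \<subseteq> G" using G FX[OF GX] by auto
  with 1 have "G = F G" by auto
  then show ?thesis by (simp add: G_def F_def)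
qed

lemma semC_unfold:
  assumes ml: "monotone_liftings ar lift" and a: "Nu x \<phi> \<in> E0 ar"
  shows "semC lift X \<xi> (Nu x \<phi>) = semC lift X \<xi> (subst x (Nu x \<phi>) \<phi>)"
proof -
  have wf: "wf_expr ar \<phi>" "fv (Nu x \<phi>) = {}" using a by (auto simp: E0_def)
  show ?thesis unfolding semC_def
    using gfp_unfold[OF ml wf(1), of "\<lambda>_. {}" X \<xi> x] sem_subst[OF wf(2), of lift X \<xi> "\<lambda>_. {}" x \<phi>]
    by simp
qed




lemma sem_hom:
  assumes pl: "pred_liftings TO TM ar lift" and ml: "monotone_liftings ar lift"
    and cX: "is_coalg TO X \<xi>" and h: "coalg_hom TM X \<xi> Y \<zeta> h"
  shows "wf_expr ar e \<Longrightarrow> (\<forall>z. \<kappa>D z \<subseteq> Y) \<Longrightarrow> (\<forall>z. \<kappa>C z = {x\<in>X. h x \<in> \<kappa>D z}) \<Longrightarrow>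
     sem lift X \<xi> \<kappa>C e = {x\<in>X. h x \<in> sem lift Y \<zeta> \<kappa>D e}"
proof (induction e arbitrary: \<kappa>C \<kappa>D)
  case (Var z)
  then show ?case by simp
next
  case (Mod L es)
  have hX: "\<forall>x\<in>X. h x \<in> Y" using h by (simp add: coalg_hom_def)
  have meq: "map (sem lift X \<xi> \<kappa>C) es = map (\<lambda>B. {x\<in>X. h x \<in> B}) (map (sem lift Y \<zeta> \<kappa>D) es)"
    unfolding map_map
  proof (rule map_cong[OF refl])
    fix y assume y: "y \<in> set es"
    have "sem lift X \<xi> \<kappa>C y = {x\<in>X. h x \<in> sem lift Y \<zeta> \<kappa>D y}"
      using Mod.prems(2,3) Mod.prems(1) y by (intro Mod.IH) simp_all
    then show "sem lift X \<xi> \<kappa>C y = ((\<lambda>B. {x\<in>X. h x \<in> B}) \<circ> sem lift Y \<zeta> \<kappa>D) y"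
      by simp
  qed
  have nat: "lift L X (map (\<lambda>B. {x\<in>X. h x \<in> B}) (map (sem lift Y \<zeta> \<kappa>D) es))
      = {t\<in>TO X. TM h t \<in> lift L Y (map (sem lift Y \<zeta> \<kappa>D) es)}"
  proof (rule nat_lift[OF pl hX])
    show "length (map (sem lift Y \<zeta> \<kappa>D) es) = ar L" using Mod.prems(1) by simp
    show "\<forall>B\<in>set (map (sem lift Y \<zeta> \<kappa>D) es). B \<subseteq> Y"
      using Mod.prems(2) sem_sub[of \<kappa>D Y lift \<zeta>] by simp
  qed
  have "sem lift X \<xi> \<kappa>C (Mod L es) = {x\<in>X. \<xi> x \<in> {t\<in>TO X. TM h t \<in> lift L Y (map (sem lift Y \<zeta> \<kappa>D) es)}}"
    unfolding sem.simps meq nat by (rule refl)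
  also have "\<dots> = {x\<in>X. h x \<in> sem lift Y \<zeta> \<kappa>D (Mod L es)}"
  proof -
    have a: "\<xi> x \<in> TO X" "TM h (\<xi> x) = \<zeta> (h x)" "h x \<in> Y" if "x \<in> X" for x
      using cX h hX that unfolding is_coalg_def coalg_hom_def by simp_all
    show ?thesis unfolding sem.simps
    proof (intro Collect_cong conj_cong refl)
      fix x assume "x \<in> X"
      then show "(\<xi> x \<in> {t \<in> TO X. TM h t \<in> lift L Y (map (sem lift Y \<zeta> \<kappa>D) es)}) =
          (h x \<in> {x \<in> Y. \<zeta> x \<in> lift L Y (map (sem lift Y \<zeta> \<kappa>D) es)})"
        using a by simp
    qed
  qed
  finally show ?case .
next
  case (Nu z e)
  have hX: "\<forall>x\<in>X. h x \<in> Y" using h by (simp add: coalg_hom_def)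
  have IH: "sem lift X \<xi> (\<kappa>C(z:={x\<in>X. h x \<in> V})) e = {x\<in>X. h x \<in> sem lift Y \<zeta> (\<kappa>D(z:=V)) e}"
    if "V \<subseteq> Y" for V
  proof (rule Nu.IH)
    show "wf_expr ar e" using Nu.prems(1) by simp
    show "\<forall>y. (\<kappa>D(z:=V)) y \<subseteq> Y" using Nu.prems(2) that by simp
    show "\<forall>y. (\<kappa>C(z:={x\<in>X. h x \<in> V})) y = {x\<in>X. h x \<in> (\<kappa>D(z:=V)) y}"
      using Nu.prems(3) by simp
  qed
  show ?case
  proof (intro equalityI subsetI)
    fix x assume "x \<in> sem lift X \<xi> \<kappa>C (Nu z e)"
    then obtain W where W: "W \<subseteq> X" "W \<subseteq> sem lift X \<xi> (\<kappa>C(z:=W)) e" "x \<in> W" by auto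
    define V where "V = h ` W"
    have VY: "V \<subseteq> Y" using W hX V_def by auto
    have "W \<subseteq> {x\<in>X. h x \<in> V}" using W V_def by auto
    then have "sem lift X \<xi> (\<kappa>C(z:=W)) e \<subseteq> sem lift X \<xi> (\<kappa>C(z:={x\<in>X. h x \<in> V})) e"
      using Nu.prems(1) W(1) by (intro sem_mono[OF ml]) (auto simp: Nu.prems(3))
    also have "\<dots> = {x\<in>X. h x \<in> sem lift Y \<zeta> (\<kappa>D(z:=V)) e}" using IH[OF VY] .
    finally have "V \<subseteq> sem lift Y \<zeta> (\<kappa>D(z:=V)) e" using W V_def by auto
    then have "V \<subseteq> sem lift Y \<zeta> \<kappa>D (Nu z e)" unfolding sem.simps
      by (intro Union_upper) (simp add: VY)
    moreover have "h x \<in> V" "x \<in> X" using W V_def by auto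
    ultimately show "x \<in> {x\<in>X. h x \<in> sem lift Y \<zeta> \<kappa>D (Nu z e)}" by blast
  next
    fix x assume "x \<in> {x\<in>X. h x \<in> sem lift Y \<zeta> \<kappa>D (Nu z e)}"
    then obtain V where V: "V \<subseteq> Y" "V \<subseteq> sem lift Y \<zeta> (\<kappa>D(z:=V)) e" "h x \<in> V" "x \<in> X" by auto
    define W where "W = {x\<in>X. h x \<in> V}"
    have "W \<subseteq> sem lift X \<xi> (\<kappa>C(z:=W)) e" using IH[OF V(1)] V(2) unfolding W_def by blast
    then have "W \<subseteq> sem lift X \<xi> \<kappa>C (Nu z e)" unfolding sem.simps
      by (intro Union_upper) (simp add: W_def)
    moreover have "x \<in> W" using V W_def by auto
    ultimately show "x \<in> sem lift X \<xi> \<kappa>C (Nu z e)" by blast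
  qed
qed

definition xclosed :: "'u set \<Rightarrow> ('u \<Rightarrow> 't) \<Rightarrow> 'u set \<Rightarrow> bool" where
  "xclosed X \<xi> S \<longleftrightarrow> S \<subseteq> X \<and> (\<forall>a\<in>X. \<forall>b\<in>X. \<xi> a = \<xi> b \<longrightarrow> a \<in> S \<longrightarrow> b \<in> S)"

lemma sem_closed:
  assumes ml: "monotone_liftings ar lift"
  shows "wf_expr ar e \<Longrightarrow> (\<forall>z. xclosed X \<xi> (\<kappa> z)) \<Longrightarrow> xclosed X \<xi> (sem lift X \<xi> \<kappa> e)"
proof (induction e arbitrary: \<kappa>)
  case (Var z)
  then show ?case by simp
next
  case (Mod L es)
  then show ?case unfolding xclosed_def by auto
next
  case (Nu z e)
  have kX: "\<forall>z. \<kappa> z \<subseteq> X" using Nu.prems by (auto simp: xclosed_def)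
  define cl where "cl W = {b\<in>X. \<exists>a\<in>W. \<xi> a = \<xi> b}" for W
  have clc: "xclosed X \<xi> (cl W)" for W unfolding xclosed_def cl_def by auto
  have post: "cl W \<subseteq> sem lift X \<xi> (\<kappa>(z:=cl W)) e" if W: "W \<subseteq> X" "W \<subseteq> sem lift X \<xi> (\<kappa>(z:=W)) e" for W
  proof -
    have "W \<subseteq> cl W" using W cl_def by auto
    then have "sem lift X \<xi> (\<kappa>(z:=W)) e \<subseteq> sem lift X \<xi> (\<kappa>(z:=cl W)) e"
      using Nu.prems kX by (intro sem_mono[OF ml]) (auto simp: cl_def)
    moreover have c: "xclosed X \<xi> (sem lift X \<xi> (\<kappa>(z:=cl W)) e)"
      using Nu.prems clc by (intro Nu.IH) auto
    ultimately have "W \<subseteq> sem lift X \<xi> (\<kappa>(z:=cl W)) e" using W by auto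
    then show ?thesis using c unfolding xclosed_def cl_def by blast
  qed
  show ?case unfolding xclosed_def
  proof (intro conjI ballI impI)
    show "sem lift X \<xi> \<kappa> (Nu z e) \<subseteq> X" by auto
  next
    fix a b assume ab: "a \<in> X" "b \<in> X" "\<xi> a = \<xi> b" "a \<in> sem lift X \<xi> \<kappa> (Nu z e)"
    then obtain W where W: "W \<subseteq> X" "W \<subseteq> sem lift X \<xi> (\<kappa>(z:=W)) e" "a \<in> W" by auto
    have "b \<in> cl W" using ab W cl_def by auto
    moreover have "cl W \<subseteq> X" by (auto simp: cl_def)
    ultimately show "b \<in> sem lift X \<xi> \<kappa> (Nu z e)" using post[OF W(1,2)] by auto
  qed
qed




lemma sem_self:
  fixes lift :: "'l \<Rightarrow> (('l,'v) expr + 'x) set \<Rightarrow> (('l,'v) expr + 'x) set list \<Rightarrow> 't set"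
    and \<sigma> :: "'v \<Rightarrow> ('l,'v) expr"
  assumes pl: "pred_liftings TO TM ar lift" and sp: "singleton_preserving ar lift"
    and ml: "monotone_liftings ar lift"
  shows "wf_expr ar e \<Longrightarrow> (\<forall>z\<in>fv e. \<sigma> z \<in> E0 ar \<and> Inl (\<sigma> z) \<in> \<kappa> z) \<Longrightarrow>
    (\<forall>z. xclosed (Inl ` E0 ar) (eps_coalg ar lift) (\<kappa> z)) \<Longrightarrow> ssubst \<sigma> e \<in> E0 ar \<Longrightarrow>
    Inl (ssubst \<sigma> e) \<in> sem lift (Inl ` E0 ar) (eps_coalg ar lift) \<kappa> e"
proof (induction e arbitrary: \<sigma> \<kappa>)
  case (Var z)
  then show ?case by simp
next
  case (Mod L es)
  define E where "E = (Inl ` E0 ar :: ((('l,'v) expr + 'x) set))"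
  define N where "N = Mod L (map (ssubst \<sigma>) es)"
  have NE: "N \<in> E0 ar" using Mod.prems(4) N_def by simp
  have kE: "\<forall>z. \<kappa> z \<subseteq> E" using Mod.prems(3) unfolding xclosed_def E_def by blast
  have len: "length es = ar L" using Mod.prems(1) by simp
  have sub: "ssubst \<sigma> y \<in> E0 ar" if "y \<in> set es" for y
    using Mod_E0[OF NE[unfolded N_def]] that by auto
  have e1: "lift L E (map (\<lambda>\<phi>. {Inl \<phi>}) (map (ssubst \<sigma>) es)) = {eps_coalg ar lift (Inl N)}"
    unfolding E_def N_def by (rule eps_Mod[OF pl sp NE[unfolded N_def]])
  have "lift L E (map (\<lambda>\<phi>. {Inl \<phi>}) (map (ssubst \<sigma>) es)) \<subseteq> lift L E (map (sem lift E (eps_coalg ar lift) \<kappa>) es)"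
  proof (rule mono_lift[OF ml])
    show "length (map (\<lambda>\<phi>. {Inl \<phi>}) (map (ssubst \<sigma>) es)) = ar L" "length (map (sem lift E (eps_coalg ar lift) \<kappa>) es) = ar L"
      using len by simp_all
    fix i assume i: "i < ar L"
    then have y: "es ! i \<in> set es" using len by simp
    have "Inl (ssubst \<sigma> (es ! i)) \<in> sem lift E (eps_coalg ar lift) \<kappa> (es ! i)"
      unfolding E_def
    proof (rule Mod.IH[OF y])
      show "wf_expr ar (es ! i)" using Mod.prems(1) y by simp
      show "\<forall>z\<in>fv (es ! i). \<sigma> z \<in> E0 ar \<and> Inl (\<sigma> z) \<in> \<kappa> z" using Mod.prems(2) y by auto
      show "\<forall>z. xclosed (Inl ` E0 ar) (eps_coalg ar lift) (\<kappa> z)" using Mod.prems(3) .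
      show "ssubst \<sigma> (es ! i) \<in> E0 ar" using sub[OF y] .
    qed
    moreover have "sem lift E (eps_coalg ar lift) \<kappa> (es ! i) \<subseteq> E" using kE by (intro sem_sub) simp
    ultimately show "map (\<lambda>\<phi>. {Inl \<phi>}) (map (ssubst \<sigma>) es) ! i \<subseteq> map (sem lift E (eps_coalg ar lift) \<kappa>) es ! i \<and>
         map (sem lift E (eps_coalg ar lift) \<kappa>) es ! i \<subseteq> E" using i len by simp
  qed
  then have "eps_coalg ar lift (Inl N) \<in> lift L E (map (sem lift E (eps_coalg ar lift) \<kappa>) es)" using e1 by simp
  moreover have "Inl N \<in> E" using NE E_def by simp
  ultimately show ?case unfolding N_def E_def by simp
next
  case (Nu z \<psi>)
  define E where "E = (Inl ` E0 ar :: ((('l,'v) expr + 'x) set))"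
  define \<epsilon> where "\<epsilon> = (eps_coalg ar lift :: (('l,'v) expr + 'x) \<Rightarrow> 't)"
  define N where "N = ssubst \<sigma> (Nu z \<psi>)"
  have NE: "N \<in> E0 ar" using Nu.prems(4) N_def by simp
  have N': "N = Nu z (ssubst (\<sigma>(z:=Var z)) \<psi>)" using N_def by simp
  define Y where "Y = {(Inl c :: ('l,'v) expr + 'x) |c. c \<in> E0 ar \<and> \<epsilon> (Inl c) = \<epsilon> (Inl N)}"
  have YN: "Inl N \<in> Y" using NE Y_def by auto
  have Yc: "xclosed E \<epsilon> Y" unfolding xclosed_def Y_def E_def by auto
  have unf: "subst z N (ssubst (\<sigma>(z:=Var z)) \<psi>) = ssubst (\<sigma>(z:=N)) \<psi>"
  proof (rule ssubst_comp)
    show "\<forall>y\<in>fv \<psi>. y \<noteq> z \<longrightarrow> z \<notin> fv (\<sigma> y)"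
      using Nu.prems(2) by (auto simp: E0_def)
  qed
  have UE: "ssubst (\<sigma>(z:=N)) \<psi> \<in> E0 ar"
    using unfold_E0[OF NE[unfolded N']] unf N' by simp
  have epsU: "\<epsilon> (Inl (ssubst (\<sigma>(z:=N)) \<psi>)) = \<epsilon> (Inl N)"
    using eps_Nu[OF pl sp NE[unfolded N']] unf N' \<epsilon>_def by simp
  have kY: "\<forall>y. xclosed E \<epsilon> ((\<kappa>(z:=Y)) y)" using Nu.prems(3) Yc E_def \<epsilon>_def by simp
  have IH: "Inl (ssubst (\<sigma>(z:=N)) \<psi>) \<in> sem lift E \<epsilon> (\<kappa>(z:=Y)) \<psi>"
    unfolding E_def \<epsilon>_def
  proof (rule Nu.IH)
    show "wf_expr ar \<psi>" using Nu.prems(1) by simp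
    show "\<forall>y\<in>fv \<psi>. (\<sigma>(z:=N)) y \<in> E0 ar \<and> Inl ((\<sigma>(z:=N)) y) \<in> (\<kappa>(z:=Y)) y"
      using Nu.prems(2) NE YN by auto
    show "\<forall>y. xclosed (Inl ` E0 ar) (eps_coalg ar lift) ((\<kappa>(z:=Y)) y)" using kY E_def \<epsilon>_def by simp
    show "ssubst (\<sigma>(z:=N)) \<psi> \<in> E0 ar" using UE .
  qed
  have C: "xclosed E \<epsilon> (sem lift E \<epsilon> (\<kappa>(z:=Y)) \<psi>)"
  proof (rule sem_closed[OF ml])
    show "wf_expr ar \<psi>" using Nu.prems(1) by simp
  qed (rule kY)
  have "Y \<subseteq> sem lift E \<epsilon> (\<kappa>(z:=Y)) \<psi>"
  proof
    fix y assume "y \<in> Y"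
    then obtain c where c: "y = Inl c" "c \<in> E0 ar" "\<epsilon> (Inl c) = \<epsilon> (Inl N)" using Y_def by auto
    show "y \<in> sem lift E \<epsilon> (\<kappa>(z:=Y)) \<psi>"
    proof -
      have A: "\<forall>a\<in>E. \<forall>b\<in>E. \<epsilon> a = \<epsilon> b \<longrightarrow> a \<in> sem lift E \<epsilon> (\<kappa>(z:=Y)) \<psi> \<longrightarrow> b \<in> sem lift E \<epsilon> (\<kappa>(z:=Y)) \<psi>"
        using C unfolding xclosed_def by (rule conjunct2)
      have a: "Inl (ssubst (\<sigma>(z:=N)) \<psi>) \<in> E" and b: "Inl c \<in> E" using UE c(2) E_def by simp_all
      have eq: "\<epsilon> (Inl (ssubst (\<sigma>(z:=N)) \<psi>)) = \<epsilon> (Inl c)" using epsU c(3) by simp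
      have "Inl c \<in> sem lift E \<epsilon> (\<kappa>(z:=Y)) \<psi>" by (rule A[rule_format, OF a b eq IH])
      then show ?thesis using c(1) by simp
    qed
  qed
  moreover have "Y \<subseteq> E" using Yc unfolding xclosed_def by (rule conjunct1)
  ultimately have "Y \<subseteq> sem lift E \<epsilon> \<kappa> (Nu z \<psi>)" unfolding sem.simps
    by (intro Union_upper) simp
  then have "Inl N \<in> sem lift E \<epsilon> \<kappa> (Nu z \<psi>)" using YN by blast
  then show ?case unfolding N_def E_def \<epsilon>_def .
qed




lemma functor_map: "set_functor TO TM \<Longrightarrow> \<forall>x\<in>X. f x \<in> Y \<Longrightarrow> t \<in> TO X \<Longrightarrow> TM f t \<in> TO Y"
  unfolding set_functor_def by (drule conjunct1) (drule spec[of _ X], drule spec[of _ Y], drule spec[of _ f], blast)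

lemma forward:
  fixes TO :: "(('l, 'v) expr + 'x) set \<Rightarrow> 't set"
    and TM :: "((('l, 'v) expr + 'x) \<Rightarrow> (('l, 'v) expr + 'x)) \<Rightarrow> 't \<Rightarrow> 't"
    and ar :: "'l \<Rightarrow> nat"
    and lift :: "'l \<Rightarrow> (('l, 'v) expr + 'x) set \<Rightarrow> (('l, 'v) expr + 'x) set list \<Rightarrow> 't set"
    and X :: "(('l, 'v) expr + 'x) set" and \<xi> :: "(('l, 'v) expr + 'x) \<Rightarrow> 't"
  assumes sf: "set_functor TO TM"
    and pl: "pred_liftings TO TM ar lift"
    and ml: "monotone_liftings ar lift"
    and sp: "singleton_preserving ar lift"
    and cX: "is_coalg TO X \<xi>" and x: "x \<in> X" and \<phi>: "\<phi> \<in> E0 ar" and xs: "x \<in> semC lift X \<xi> \<phi>"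
  shows "beh_equiv TO TM X \<xi> x (Inl ` E0 ar) (eps_coalg ar lift) (Inl \<phi>)"
proof -
  define E where "E = (Inl ` E0 ar :: (('l, 'v) expr + 'x) set)"
  define \<epsilon> where "\<epsilon> = (eps_coalg ar lift :: (('l, 'v) expr + 'x) \<Rightarrow> 't)"
  define a1 :: "(('l, 'v) expr + 'x) \<Rightarrow> (('l, 'v) expr + 'x)"
    where "a1 u = (case u of Inl e \<Rightarrow> Inl (Nu undefined e) | Inr b \<Rightarrow> Inr b)" for u
  define a2 :: "(('l, 'v) expr + 'x) \<Rightarrow> (('l, 'v) expr + 'x)"
    where "a2 u = Inl (Mod undefined [projl u])" for u
  have a1inj: "u = u'" if "a1 u = a1 u'" for u u'
    using that by (cases u; cases u') (simp_all add: a1_def)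
  have a12: "a1 u \<noteq> a2 w" for u w
    by (cases u) (simp_all add: a1_def a2_def)
  have a2inj: "u = u'" if "a2 u = a2 u'" "u \<in> E" "u' \<in> E" for u u'
    using that by (auto simp: a2_def E_def)
  define R0 where "R0 = {(a1 y, a2 (Inl \<psi>)) | y \<psi>. y \<in> X \<and> \<psi> \<in> E0 ar \<and> y \<in> semC lift X \<xi> \<psi>}"
  define eqv where "eqv = (R0 \<union> R0\<inverse>)\<^sup>*"
  have symq: "sym eqv" unfolding eqv_def by (intro sym_rtrancl) (simp add: sym_Un_converse)
  have transq: "trans eqv" unfolding eqv_def by (rule trans_rtrancl)
  define q where "q d = (SOME d'. (d, d') \<in> eqv)" for d
  have qd: "(d, q d) \<in> eqv" for d
    unfolding q_def by (rule someI[of _ d]) (simp add: eqv_def)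
  have qeq: "q d = q d'" if "(d, d') \<in> eqv" for d d'
  proof -
    have "(\<lambda>e. (d, e) \<in> eqv) = (\<lambda>e. (d', e) \<in> eqv)"
    proof (rule ext, rule iffI)
      fix e assume "(d, e) \<in> eqv"
      moreover have "(d', d) \<in> eqv" using symD[OF symq that] .
      ultimately show "(d', e) \<in> eqv" using transD[OF transq] by blast
    next
      fix e assume "(d', e) \<in> eqv"
      then show "(d, e) \<in> eqv" using transD[OF transq] that by blast
    qed
    then show ?thesis unfolding q_def by simp
  qed
  have qiff: "(d, d') \<in> eqv" if "q d = q d'" for d d'
  proof -
    have "(d', q d) \<in> eqv" using qd[of d'] that by simp
    then have "(q d, d') \<in> eqv" using symD[OF symq] by blast
    then show ?thesis using qd[of d] transD[OF transq] by blast
  qed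
  define h where "h = q \<circ> a1"
  define g where "g = q \<circ> a2"
  define Z where "Z = h ` X \<union> g ` E"
  have hX: "\<forall>y\<in>X. h y \<in> Z" and gE: "\<forall>e\<in>E. g e \<in> Z" unfolding Z_def by auto
  have R: "h y = g (Inl \<psi>)" if "y \<in> X" "\<psi> \<in> E0 ar" "y \<in> semC lift X \<xi> \<psi>" for y \<psi>
  proof -
    have "(a1 y, a2 (Inl \<psi>)) \<in> R0" using that R0_def by blast
    then have "(a1 y, a2 (Inl \<psi>)) \<in> eqv" unfolding eqv_def by (intro r_into_rtrancl UnI1)
    then show ?thesis unfolding h_def g_def using qeq by simp
  qed
  have stepL: "\<forall>y. y \<in> X \<longrightarrow> y \<in> semC lift X \<xi> \<psi> \<longrightarrow> TM h (\<xi> y) = TM g (\<epsilon> (Inl \<psi>))"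
    if "\<psi> \<in> E0 ar" for \<psi>
    using that
  proof (induction "nus \<psi>" arbitrary: \<psi> rule: less_induct)
    case less
    show ?case
    proof (cases \<psi>)
      case (Var z)
      then show ?thesis using less.prems by (auto simp: E0_def)
    next
      case (Nu z \<chi>)
      have U: "subst z (Nu z \<chi>) \<chi> \<in> E0 ar" "nus (subst z (Nu z \<chi>) \<chi>) < nus \<psi>"
        using unfold_E0 unfold_nus less.prems Nu by auto
      have "semC lift X \<xi> \<psi> = semC lift X \<xi> (subst z (Nu z \<chi>) \<chi>)"
        using semC_unfold[OF ml] less.prems Nu by simp
      moreover have "\<epsilon> (Inl \<psi>) = \<epsilon> (Inl (subst z (Nu z \<chi>) \<chi>))"
        using eps_Nu[OF pl sp] less.prems Nu \<epsilon>_def by simp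
      ultimately show ?thesis using less.hyps[OF U(2) U(1)] by simp
    next
      case (Mod L \<phi>s)
      have m: "length \<phi>s = ar L" "\<forall>\<phi>\<in>set \<phi>s. \<phi> \<in> E0 ar" using Mod_E0[of L \<phi>s ar] less.prems Mod by blast+
      define Bs where "Bs = map (\<lambda>\<phi>. {g (Inl \<phi>)}) \<phi>s"
      have lB: "length Bs = ar L" using m Bs_def by simp
      have BZ: "\<forall>B\<in>set Bs. B \<subseteq> Z" using m gE E_def Bs_def by auto
      have card: "card (lift L Z Bs) = 1"
      proof -
        have "Bs = map (\<lambda>x. {x}) (map (\<lambda>\<phi>. g (Inl \<phi>)) \<phi>s)" using Bs_def by simp
        moreover have "length (map (\<lambda>\<phi>. g (Inl \<phi>)) \<phi>s) = ar L \<and> set (map (\<lambda>\<phi>. g (Inl \<phi>)) \<phi>s) \<subseteq> Z"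
          using m gE E_def by auto
        ultimately show ?thesis using sp unfolding singleton_preserving_def by metis
      qed
      have T2: "TM g (\<epsilon> (Inl \<psi>)) \<in> lift L Z Bs"
      proof -
        have "lift L E (map (\<lambda>\<phi>. {Inl \<phi>}) \<phi>s) = {\<epsilon> (Inl \<psi>)}"
          using eps_Mod[OF pl sp] less.prems Mod \<epsilon>_def E_def by simp
        moreover have "lift L E (map (\<lambda>\<phi>. {Inl \<phi>}) \<phi>s) \<subseteq> lift L E (map (\<lambda>B. {e\<in>E. g e \<in> B}) Bs)"
        proof (rule mono_lift[OF ml])
          show "length (map (\<lambda>\<phi>. {Inl \<phi>}) \<phi>s) = ar L" "length (map (\<lambda>B. {e\<in>E. g e \<in> B}) Bs) = ar L"
            using m lB by simp_all
          fix i assume "i < ar L"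
          then show "map (\<lambda>\<phi>. {Inl \<phi>}) \<phi>s ! i \<subseteq> map (\<lambda>B. {e\<in>E. g e \<in> B}) Bs ! i \<and>
              map (\<lambda>B. {e\<in>E. g e \<in> B}) Bs ! i \<subseteq> E"
            using m Bs_def E_def by auto
        qed
        moreover have "lift L E (map (\<lambda>B. {e\<in>E. g e \<in> B}) Bs) = {t\<in>TO E. TM g t \<in> lift L Z Bs}"
          by (rule nat_lift[OF pl gE lB BZ])
        ultimately show ?thesis by auto
      qed
      have T1: "TM h (\<xi> y) \<in> lift L Z Bs" if y: "y \<in> X" "y \<in> semC lift X \<xi> \<psi>" for y
      proof -
        have "\<xi> y \<in> lift L X (map (sem lift X \<xi> (\<lambda>_. {})) \<phi>s)"
          using y Mod unfolding semC_def by simp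
        moreover have "lift L X (map (sem lift X \<xi> (\<lambda>_. {})) \<phi>s) \<subseteq> lift L X (map (\<lambda>B. {x\<in>X. h x \<in> B}) Bs)"
        proof (rule mono_lift[OF ml])
          show "length (map (sem lift X \<xi> (\<lambda>_. {})) \<phi>s) = ar L" "length (map (\<lambda>B. {x\<in>X. h x \<in> B}) Bs) = ar L"
            using m lB by simp_all
          fix i assume i: "i < ar L"
          then have phi: "\<phi>s ! i \<in> E0 ar" using m by simp
          have "sem lift X \<xi> (\<lambda>_. {}) (\<phi>s ! i) \<subseteq> {x\<in>X. h x \<in> {g (Inl (\<phi>s ! i))}}"
          proof
            fix y' assume y': "y' \<in> sem lift X \<xi> (\<lambda>_. {}) (\<phi>s ! i)"
            have "y' \<in> X" using y' sem_sub[of "\<lambda>_. {}" X lift \<xi> "\<phi>s ! i"] by auto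
            moreover have "h y' = g (Inl (\<phi>s ! i))" using R[OF \<open>y' \<in> X\<close> phi] y' unfolding semC_def by simp
            ultimately show "y' \<in> {x\<in>X. h x \<in> {g (Inl (\<phi>s ! i))}}" by simp
          qed
          then show "map (sem lift X \<xi> (\<lambda>_. {})) \<phi>s ! i \<subseteq> map (\<lambda>B. {x\<in>X. h x \<in> B}) Bs ! i \<and>
              map (\<lambda>B. {x\<in>X. h x \<in> B}) Bs ! i \<subseteq> X"
            using i m Bs_def by auto
        qed
        moreover have "lift L X (map (\<lambda>B. {x\<in>X. h x \<in> B}) Bs) = {t\<in>TO X. TM h t \<in> lift L Z Bs}"
          by (rule nat_lift[OF pl hX lB BZ])
        ultimately show ?thesis by auto
      qed
      show ?thesis
      proof (intro allI impI)
        fix y assume "y \<in> X" "y \<in> semC lift X \<xi> \<psi>"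
        then have "TM h (\<xi> y) \<in> lift L Z Bs" by (rule T1)
        with T2 card show "TM h (\<xi> y) = TM g (\<epsilon> (Inl \<psi>))" by (metis card_1_singletonE singletonD)
      qed
    qed
  qed
  define val where "val d t \<longleftrightarrow> (\<exists>y\<in>X. d = a1 y \<and> t = TM h (\<xi> y)) \<or> (\<exists>e\<in>E. d = a2 e \<and> t = TM g (\<epsilon> e))" for d t
  have valdet: "t = t'" if "val d t" "val d t'" for d t t'
    using that unfolding val_def by (metis a12 a1inj a2inj)
  have valprop: "val d' t" if "(d, d') \<in> eqv" "val d t" for d d' t
    using that(1) unfolding eqv_def
  proof (induction rule: rtrancl_induct)
    case base
    then show ?case using that(2) .
  next
    case (step d1 d2)
    from step.hyps(2) show ?case
    proof
      assume "(d1, d2) \<in> R0"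
      then obtain y \<psi> where s: "d1 = a1 y" "d2 = a2 (Inl \<psi>)" "y \<in> X" "\<psi> \<in> E0 ar" "y \<in> semC lift X \<xi> \<psi>"
        unfolding R0_def by blast
      have "val d1 (TM h (\<xi> y))" using s val_def by blast
      then have "t = TM h (\<xi> y)" using valdet step.IH by blast
      also have "\<dots> = TM g (\<epsilon> (Inl \<psi>))" using stepL[OF s(4)] s by blast
      finally show "val d2 t" using s val_def E_def by auto
    next
      assume "(d1, d2) \<in> R0\<inverse>"
      then obtain y \<psi> where s: "d2 = a1 y" "d1 = a2 (Inl \<psi>)" "y \<in> X" "\<psi> \<in> E0 ar" "y \<in> semC lift X \<xi> \<psi>"
        unfolding R0_def by blast
      have "val d1 (TM g (\<epsilon> (Inl \<psi>)))" using s val_def E_def by auto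
      then have "t = TM g (\<epsilon> (Inl \<psi>))" using valdet step.IH by blast
      also have "\<dots> = TM h (\<xi> y)" using stepL[OF s(4)] s by simp
      finally show "val d2 t" using s val_def by auto
    qed
  qed
  define \<theta> where "\<theta> z = (SOME t. \<exists>d. q d = z \<and> val d t)" for z
  have \<theta>val: "\<theta> (q d) = t" if "val d t" for d t
  proof -
    have ex: "\<exists>d'. q d' = q d \<and> val d' t" using that by blast
    have "\<exists>d'. q d' = q d \<and> val d' (\<theta> (q d))" unfolding \<theta>_def by (rule someI_ex) (use ex in blast)
    then obtain d' where d': "q d' = q d" "val d' (\<theta> (q d))" by blast
    have "(d', d) \<in> eqv" using qiff d'(1) by simp
    then have "val d (\<theta> (q d))" using valprop d'(2) by blast
    then show ?thesis using valdet that by blast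
  qed
  have th1: "\<theta> (h y) = TM h (\<xi> y)" if "y \<in> X" for y
    using \<theta>val[of "a1 y"] that unfolding h_def val_def by auto
  have th2: "\<theta> (g e) = TM g (\<epsilon> e)" if "e \<in> E" for e
    using \<theta>val[of "a2 e"] that unfolding g_def val_def by auto
  have cE: "is_coalg TO E \<epsilon>" using eps_is_coalg[OF pl sp] E_def \<epsilon>_def by simp
  have cZ: "is_coalg TO Z \<theta>"
    unfolding is_coalg_def
  proof
    fix z assume "z \<in> Z"
    then consider y where "y \<in> X" "z = h y" | e where "e \<in> E" "z = g e" unfolding Z_def by blast
    then show "\<theta> z \<in> TO Z"
    proof cases
      case 1
      then show ?thesis using th1 functor_map[OF sf hX] cX unfolding is_coalg_def by simp
    next
      case 2
      then show ?thesis using th2 functor_map[OF sf gE] cE unfolding is_coalg_def by simp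
    qed
  qed
  have hh: "coalg_hom TM X \<xi> Z \<theta> h" unfolding coalg_hom_def using hX th1 by simp
  have gh: "coalg_hom TM E \<epsilon> Z \<theta> g" unfolding coalg_hom_def using gE th2 by simp
  have hg: "h x = g (Inl \<phi>)" using R[OF x \<phi> xs] .
  have "is_coalg TO Z \<theta> \<and> coalg_hom TM X \<xi> Z \<theta> h \<and> coalg_hom TM (Inl ` E0 ar) (eps_coalg ar lift) Z \<theta> g \<and> h x = g (Inl \<phi>)"
    using cZ hh gh hg unfolding E_def \<epsilon>_def by (intro conjI)
  then show ?thesis unfolding beh_equiv_def by (intro exI)
qed




theorem mainTheorem16:
  fixes TO :: "(('l, 'v) expr + 'x) set \<Rightarrow> 't set"
    and TM :: "((('l, 'v) expr + 'x) \<Rightarrow> (('l, 'v) expr + 'x)) \<Rightarrow> 't \<Rightarrow> 't"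
    and ar :: "'l \<Rightarrow> nat"
    and lift :: "'l \<Rightarrow> (('l, 'v) expr + 'x) set \<Rightarrow> (('l, 'v) expr + 'x) set list \<Rightarrow> 't set"
  assumes "set_functor TO TM"
    and "pred_liftings TO TM ar lift"
    and "monotone_liftings ar lift"
    and "singleton_preserving ar lift"
    and "strongly_expressive TO ar lift"
  shows "(\<forall>\<phi>\<in>E0 ar. \<forall>X \<xi>. is_coalg TO X \<xi> \<longrightarrow>
            (\<forall>x\<in>X. x \<in> semC lift X \<xi> \<phi> \<longleftrightarrow>
               beh_equiv TO TM X \<xi> x (Inl ` E0 ar) (eps_coalg ar lift) (Inl \<phi>)))
       \<and> (\<forall>\<phi>\<in>E0 ar. Inl \<phi> \<in> semC lift (Inl ` E0 ar) (eps_coalg ar lift) \<phi>)"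
proof -
  note sf = assms(1) and pl = assms(2) and ml = assms(3) and sp = assms(4)
  have second: "Inl \<phi> \<in> semC lift (Inl ` E0 ar) (eps_coalg ar lift) \<phi>" if \<phi>: "\<phi> \<in> E0 ar" for \<phi>
  proof -
    have "Inl (ssubst Var \<phi>) \<in> sem lift (Inl ` E0 ar) (eps_coalg ar lift) (\<lambda>_. {}) \<phi>"
    proof (rule sem_self[OF pl sp ml])
      show "wf_expr ar \<phi>" using \<phi> by (simp add: E0_def)
      show "\<forall>z\<in>fv \<phi>. Var z \<in> E0 ar \<and> Inl (Var z) \<in> {}" using \<phi> by (simp add: E0_def)
      show "\<forall>z. xclosed (Inl ` E0 ar) (eps_coalg ar lift) {}" by (simp add: xclosed_def)
      show "ssubst Var \<phi> \<in> E0 ar" using \<phi> by (simp add: ssubst_Var)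
    qed
    then show ?thesis unfolding semC_def by (simp add: ssubst_Var)
  qed
  have first: "x \<in> semC lift X \<xi> \<phi> \<longleftrightarrow> beh_equiv TO TM X \<xi> x (Inl ` E0 ar) (eps_coalg ar lift) (Inl \<phi>)"
    if \<phi>: "\<phi> \<in> E0 ar" and cX: "is_coalg TO X \<xi>" and x: "x \<in> X" for \<phi> X \<xi> x
  proof
    assume "x \<in> semC lift X \<xi> \<phi>"
    then show "beh_equiv TO TM X \<xi> x (Inl ` E0 ar) (eps_coalg ar lift) (Inl \<phi>)"
      by (rule forward[OF sf pl ml sp cX x \<phi>])
  next
    assume "beh_equiv TO TM X \<xi> x (Inl ` E0 ar) (eps_coalg ar lift) (Inl \<phi>)"
    then obtain Z \<theta> h g where Z: "is_coalg TO Z \<theta>" and h: "coalg_hom TM X \<xi> Z \<theta> h"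
      and g: "coalg_hom TM (Inl ` E0 ar) (eps_coalg ar lift) Z \<theta> g" and hg: "h x = g (Inl \<phi>)"
      unfolding beh_equiv_def by blast
    have wf: "wf_expr ar \<phi>" using \<phi> by (simp add: E0_def)
    have cE: "is_coalg TO (Inl ` E0 ar) (eps_coalg ar lift)" by (rule eps_is_coalg[OF pl sp])
    have s1: "sem lift X \<xi> (\<lambda>_. {}) \<phi> = {x\<in>X. h x \<in> sem lift Z \<theta> (\<lambda>_. {}) \<phi>}"
      by (rule sem_hom[OF pl ml cX h wf]) simp_all
    have s2: "sem lift (Inl ` E0 ar) (eps_coalg ar lift) (\<lambda>_. {}) \<phi> =
        {x\<in>Inl ` E0 ar. g x \<in> sem lift Z \<theta> (\<lambda>_. {}) \<phi>}"
      by (rule sem_hom[OF pl ml cE g wf]) simp_all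
    have "g (Inl \<phi>) \<in> sem lift Z \<theta> (\<lambda>_. {}) \<phi>" using second[OF \<phi>] s2 unfolding semC_def by blast
    then show "x \<in> semC lift X \<xi> \<phi>" using s1 x hg unfolding semC_def by simp
  qed
  show ?thesis using first second by blast
qed


end
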